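(* For every $\pi\in S_n$, the lattice $G/\beta_\pi$ is a slim semimodular lattice of length $n$.
   Context: $G$ is the direct product of two chains $0=c_0\prec\dots\prec c_n$ and $0=d_0\prec\dots\prec d_n$, its elements written uniquely as $c_i\vee d_j$. A join-congruence is an equivalence relation compatible with $\vee$. For $\pi\in S_n$ (permutations of $\{1,\dots,n\}$), $\beta_\pi$ is the join, in the lattice of join-congruences of $(G;\vee)$, of the smallest join-congruences collapsing $\{c_{i-1}\vee d_{\pi(i)},c_i\vee d_{\pi(i)-1},c_i\vee d_{\pi(i)}\}$, $i=1,\dots,n$; the quotient join-semilattice $G/\beta_\pi$ is finite with $0$, hence a lattice. A finite lattice is slim if its join-irreducible elements (including $0$) contain no three-element antichain; semimodular means $a\prec b$ implies $a\vee c\preceq b\vee c$. *)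

theory Defs
  imports "HOL-Combinatorics.Permutations"
begin

section \<open>The grid G = chain {c_0..c_n} x chain {d_0..d_n}; c_i \<or> d_j is the pair (i,j)\<close>

definition grid :: "nat \<Rightarrow> (nat \<times> nat) set" where
  "grid n = {0..n} \<times> {0..n}"

definition gjoin :: "nat \<times> nat \<Rightarrow> nat \<times> nat \<Rightarrow> nat \<times> nat" where
  "gjoin x y = (max (fst x) (fst y), max (snd x) (snd y))"

definition join_cong :: "nat \<Rightarrow> ((nat \<times> nat) \<times> (nat \<times> nat)) set \<Rightarrow> bool" where
  "join_cong n \<theta> \<longleftrightarrow> equiv (grid n) \<theta> \<and>
     (\<forall>x y z. (x, y) \<in> \<theta> \<longrightarrow> z \<in> grid n \<longrightarrow> (gjoin x z, gjoin y z) \<in> \<theta>)"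

text \<open>theta collapses the i-th triple {c_(i-1) v d_pi(i), c_i v d_(pi(i)-1), c_i v d_pi(i)}.\<close>
definition collapses_triple :: "(nat \<Rightarrow> nat) \<Rightarrow> nat \<Rightarrow> ((nat \<times> nat) \<times> (nat \<times> nat)) set \<Rightarrow> bool" where
  "collapses_triple \<pi> i \<theta> \<longleftrightarrow>
     ((i - 1, \<pi> i), (i, \<pi> i)) \<in> \<theta> \<and> ((i, \<pi> i - 1), (i, \<pi> i)) \<in> \<theta>"

text \<open>beta_pi: the join (in the lattice of join-congruences) of the smallest join-congruences
  collapsing the triples, i.e. the smallest join-congruence collapsing all of them.\<close>
definition beta :: "nat \<Rightarrow> (nat \<Rightarrow> nat) \<Rightarrow> ((nat \<times> nat) \<times> (nat \<times> nat)) set" where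
  "beta n \<pi> = \<Inter> {\<theta>. join_cong n \<theta> \<and> (\<forall>i\<in>{1..n}. collapses_triple \<pi> i \<theta>)}"

text \<open>Quotient join-semilattice G/theta and its order: A \<le> B iff A \<or> B = B.\<close>
definition quot :: "nat \<Rightarrow> ((nat \<times> nat) \<times> (nat \<times> nat)) set \<Rightarrow> (nat \<times> nat) set set" where
  "quot n \<theta> = grid n // \<theta>"

definition quot_le :: "((nat \<times> nat) \<times> (nat \<times> nat)) set \<Rightarrow> (nat \<times> nat) set \<Rightarrow> (nat \<times> nat) set \<Rightarrow> bool" where
  "quot_le \<theta> A B \<longleftrightarrow> (\<exists>x\<in>A. \<exists>y\<in>B. (gjoin x y, y) \<in> \<theta>)"

definition is_lub :: "'a set \<Rightarrow> ('a \<Rightarrow> 'a \<Rightarrow> bool) \<Rightarrow> 'a \<Rightarrow> 'a \<Rightarrow> 'a \<Rightarrow> bool" where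
  "is_lub S le a b z \<longleftrightarrow> z \<in> S \<and> le a z \<and> le b z \<and> (\<forall>w\<in>S. le a w \<longrightarrow> le b w \<longrightarrow> le z w)"

definition is_glb :: "'a set \<Rightarrow> ('a \<Rightarrow> 'a \<Rightarrow> bool) \<Rightarrow> 'a \<Rightarrow> 'a \<Rightarrow> 'a \<Rightarrow> bool" where
  "is_glb S le a b z \<longleftrightarrow> z \<in> S \<and> le z a \<and> le z b \<and> (\<forall>w\<in>S. le w a \<longrightarrow> le w b \<longrightarrow> le w z)"

definition is_lattice :: "'a set \<Rightarrow> ('a \<Rightarrow> 'a \<Rightarrow> bool) \<Rightarrow> bool" where
  "is_lattice S le \<longleftrightarrow>
     (\<forall>a\<in>S. le a a) \<and>
     (\<forall>a\<in>S. \<forall>b\<in>S. le a b \<longrightarrow> le b a \<longrightarrow> a = b) \<and>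
     (\<forall>a\<in>S. \<forall>b\<in>S. \<forall>c\<in>S. le a b \<longrightarrow> le b c \<longrightarrow> le a c) \<and>
     (\<forall>a\<in>S. \<forall>b\<in>S. (\<exists>z. is_lub S le a b z) \<and> (\<exists>z. is_glb S le a b z))"

definition covers :: "'a set \<Rightarrow> ('a \<Rightarrow> 'a \<Rightarrow> bool) \<Rightarrow> 'a \<Rightarrow> 'a \<Rightarrow> bool" where
  "covers S le a b \<longleftrightarrow> a \<in> S \<and> b \<in> S \<and> le a b \<and> a \<noteq> b \<and>
     \<not> (\<exists>c\<in>S. le a c \<and> le c b \<and> c \<noteq> a \<and> c \<noteq> b)"

definition semimodular :: "'a set \<Rightarrow> ('a \<Rightarrow> 'a \<Rightarrow> bool) \<Rightarrow> bool" where
  "semimodular S le \<longleftrightarrow>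
     (\<forall>a b c u v. covers S le a b \<longrightarrow> c \<in> S \<longrightarrow> is_lub S le a c u \<longrightarrow> is_lub S le b c v \<longrightarrow>
        u = v \<or> covers S le u v)"

text \<open>Join-irreducible elements, including 0 (x = y \<or> z implies x = y or x = z).\<close>
definition join_irreducibles :: "'a set \<Rightarrow> ('a \<Rightarrow> 'a \<Rightarrow> bool) \<Rightarrow> 'a set" where
  "join_irreducibles S le = {x\<in>S. \<forall>y\<in>S. \<forall>z\<in>S. is_lub S le y z x \<longrightarrow> x = y \<or> x = z}"

definition slim :: "'a set \<Rightarrow> ('a \<Rightarrow> 'a \<Rightarrow> bool) \<Rightarrow> bool" where
  "slim S le \<longleftrightarrow> \<not> (\<exists>a\<in>join_irreducibles S le. \<exists>b\<in>join_irreducibles S le.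
       \<exists>c\<in>join_irreducibles S le.
       a \<noteq> b \<and> a \<noteq> c \<and> b \<noteq> c \<and>
       \<not> le a b \<and> \<not> le b a \<and> \<not> le a c \<and> \<not> le c a \<and> \<not> le b c \<and> \<not> le c b)"

definition is_chain_in :: "'a set \<Rightarrow> ('a \<Rightarrow> 'a \<Rightarrow> bool) \<Rightarrow> 'a set \<Rightarrow> bool" where
  "is_chain_in S le C \<longleftrightarrow> C \<subseteq> S \<and> (\<forall>a\<in>C. \<forall>b\<in>C. le a b \<or> le b a)"

definition lattice_length :: "'a set \<Rightarrow> ('a \<Rightarrow> 'a \<Rightarrow> bool) \<Rightarrow> nat" where
  "lattice_length S le = Max {card C - 1 | C. is_chain_in S le C}"

end

theory Submission
  imports Defs
begin


context
  fixes f :: "'a \<Rightarrow> 'b" and S :: "'a set" and T :: "'b set" and le :: "'a \<Rightarrow> 'a \<Rightarrow> bool" and le' :: "'b \<Rightarrow> 'b \<Rightarrow> bool"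
  assumes bij: "bij_betw f S T"
    and ord: "\<And>a b. a \<in> S \<Longrightarrow> b \<in> S \<Longrightarrow> le a b = le' (f a) (f b)"
begin

lemma fS: "a \<in> S \<Longrightarrow> f a \<in> T" using bij bij_betwE by blast
lemma fT: "w \<in> T \<Longrightarrow> \<exists>v\<in>S. w = f v" using bij by (metis bij_betw_def imageE)
lemma finj: "a \<in> S \<Longrightarrow> b \<in> S \<Longrightarrow> f a = f b \<Longrightarrow> a = b"
  using bij unfolding bij_betw_def inj_on_def by blast

lemma ballT: "(\<forall>w\<in>T. P w) \<longleftrightarrow> (\<forall>v\<in>S. P (f v))"
  using fS fT by blast

lemma bexT: "(\<exists>w\<in>T. P w) \<longleftrightarrow> (\<exists>v\<in>S. P (f v))"
  using fS fT by blast

lemma f_eq: "a \<in> S \<Longrightarrow> b \<in> S \<Longrightarrow> (f a = f b) = (a = b)"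
  using finj by blast

lemma tr_lub: "a \<in> S \<Longrightarrow> b \<in> S \<Longrightarrow> z \<in> S \<Longrightarrow> is_lub S le a b z \<longleftrightarrow> is_lub T le' (f a) (f b) (f z)"
  unfolding is_lub_def ballT by (simp add: ord fS)

lemma tr_glb: "a \<in> S \<Longrightarrow> b \<in> S \<Longrightarrow> z \<in> S \<Longrightarrow> is_glb S le a b z \<longleftrightarrow> is_glb T le' (f a) (f b) (f z)"
  unfolding is_glb_def ballT by (simp add: ord fS)

lemma tr_exlub: "a \<in> S \<Longrightarrow> b \<in> S \<Longrightarrow> (\<exists>z. is_lub S le a b z) \<longleftrightarrow> (\<exists>z. is_lub T le' (f a) (f b) z)"
proof
  assume "a \<in> S" "b \<in> S" "\<exists>z. is_lub S le a b z"
  then obtain z where "is_lub S le a b z" by blast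
  moreover then have "z \<in> S" unfolding is_lub_def by blast
  ultimately show "\<exists>z. is_lub T le' (f a) (f b) z" using tr_lub \<open>a \<in> S\<close> \<open>b \<in> S\<close> by blast
next
  assume "a \<in> S" "b \<in> S" "\<exists>z. is_lub T le' (f a) (f b) z"
  then obtain z where z: "is_lub T le' (f a) (f b) z" by blast
  then have "z \<in> T" unfolding is_lub_def by blast
  then obtain v where "v \<in> S" "z = f v" using fT by blast
  then show "\<exists>z. is_lub S le a b z" using tr_lub \<open>a \<in> S\<close> \<open>b \<in> S\<close> z by blast
qed

lemma tr_exglb: "a \<in> S \<Longrightarrow> b \<in> S \<Longrightarrow> (\<exists>z. is_glb S le a b z) \<longleftrightarrow> (\<exists>z. is_glb T le' (f a) (f b) z)"
proof
  assume "a \<in> S" "b \<in> S" "\<exists>z. is_glb S le a b z"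
  then obtain z where "is_glb S le a b z" by blast
  moreover then have "z \<in> S" unfolding is_glb_def by blast
  ultimately show "\<exists>z. is_glb T le' (f a) (f b) z" using tr_glb \<open>a \<in> S\<close> \<open>b \<in> S\<close> by blast
next
  assume "a \<in> S" "b \<in> S" "\<exists>z. is_glb T le' (f a) (f b) z"
  then obtain z where z: "is_glb T le' (f a) (f b) z" by blast
  then have "z \<in> T" unfolding is_glb_def by blast
  then obtain v where "v \<in> S" "z = f v" using fT by blast
  then show "\<exists>z. is_glb S le a b z" using tr_glb \<open>a \<in> S\<close> \<open>b \<in> S\<close> z by blast
qed

lemma tr_lattice: "is_lattice T le' \<Longrightarrow> is_lattice S le"
proof -
  assume "is_lattice T le'"
  then have L1: "\<forall>a\<in>T. le' a a" and L2: "\<forall>a\<in>T. \<forall>b\<in>T. le' a b \<longrightarrow> le' b a \<longrightarrow> a = b"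
    and L3: "\<forall>a\<in>T. \<forall>b\<in>T. \<forall>c\<in>T. le' a b \<longrightarrow> le' b c \<longrightarrow> le' a c"
    and L4: "\<forall>a\<in>T. \<forall>b\<in>T. (\<exists>z. is_lub T le' a b z) \<and> (\<exists>z. is_glb T le' a b z)"
    unfolding is_lattice_def by blast+
  have "\<forall>a\<in>S. le a a" using L1 ord fS by auto
  moreover have "\<forall>a\<in>S. \<forall>b\<in>S. le a b \<longrightarrow> le b a \<longrightarrow> a = b"
  proof (intro ballI impI)
    fix a b assume ab: "a \<in> S" "b \<in> S" "le a b" "le b a"
    then have "le' (f a) (f b)" "le' (f b) (f a)" using ord by auto
    then have "f a = f b" using L2 fS ab(1,2) by blast
    then show "a = b" using finj ab(1,2) by blast
  qed
  moreover have "\<forall>a\<in>S. \<forall>b\<in>S. \<forall>c\<in>S. le a b \<longrightarrow> le b c \<longrightarrow> le a c"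
  proof (intro ballI impI)
    fix a b c assume ab: "a \<in> S" "b \<in> S" "c \<in> S" "le a b" "le b c"
    then have "le' (f a) (f b)" "le' (f b) (f c)" using ord by auto
    then have "le' (f a) (f c)" using L3 fS ab(1,2,3) by blast
    then show "le a c" using ord ab(1,3) by blast
  qed
  moreover have "\<forall>a\<in>S. \<forall>b\<in>S. (\<exists>z. is_lub S le a b z) \<and> (\<exists>z. is_glb S le a b z)"
    using L4 fS tr_exlub tr_exglb by auto
  ultimately show ?thesis unfolding is_lattice_def by blast
qed

lemma tr_covers: "a \<in> S \<Longrightarrow> b \<in> S \<Longrightarrow> covers S le a b \<longleftrightarrow> covers T le' (f a) (f b)"
  unfolding covers_def bexT by (simp add: ord fS f_eq)

lemma tr_semimodular: "semimodular T le' \<Longrightarrow> semimodular S le"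
  unfolding semimodular_def
proof (intro allI impI)
  fix a b c u v
  assume SM: "\<forall>a b c u v. covers T le' a b \<longrightarrow> c \<in> T \<longrightarrow> is_lub T le' a c u \<longrightarrow> is_lub T le' b c v \<longrightarrow>
        u = v \<or> covers T le' u v"
    and cv: "covers S le a b" and c: "c \<in> S" and u: "is_lub S le a c u" and v: "is_lub S le b c v"
  have ab: "a \<in> S" "b \<in> S" using cv unfolding covers_def by auto
  have uv: "u \<in> S" "v \<in> S" using u v unfolding is_lub_def by auto
  have "f u = f v \<or> covers T le' (f u) (f v)"
    using SM cv c u v ab uv tr_covers tr_lub fS by meson
  then show "u = v \<or> covers S le u v" using finj uv tr_covers by blast
qed

lemma tr_JI: "x \<in> S \<Longrightarrow> x \<in> join_irreducibles S le \<longleftrightarrow> f x \<in> join_irreducibles T le'"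
  unfolding join_irreducibles_def ballT by (simp add: fS f_eq tr_lub)

lemma tr_slim: "slim T le' \<Longrightarrow> slim S le"
  unfolding slim_def
proof (rule notI, elim bexE conjE)
  fix a b c
  assume N: "\<not> (\<exists>a\<in>join_irreducibles T le'. \<exists>b\<in>join_irreducibles T le'. \<exists>c\<in>join_irreducibles T le'.
       a \<noteq> b \<and> a \<noteq> c \<and> b \<noteq> c \<and> \<not> le' a b \<and> \<not> le' b a \<and> \<not> le' a c \<and> \<not> le' c a \<and> \<not> le' b c \<and> \<not> le' c b)"
    and J: "a \<in> join_irreducibles S le" "b \<in> join_irreducibles S le" "c \<in> join_irreducibles S le"
    and R: "a \<noteq> b" "a \<noteq> c" "b \<noteq> c" "\<not> le a b" "\<not> le b a" "\<not> le a c" "\<not> le c a" "\<not> le b c" "\<not> le c b"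
  have S: "a \<in> S" "b \<in> S" "c \<in> S" using J unfolding join_irreducibles_def by auto
  have "f a \<in> join_irreducibles T le'" "f b \<in> join_irreducibles T le'" "f c \<in> join_irreducibles T le'"
    using J S tr_JI by auto
  moreover have "f a \<noteq> f b" "f a \<noteq> f c" "f b \<noteq> f c" using R S by (simp_all add: f_eq)
  moreover have "\<not> le' (f a) (f b)" "\<not> le' (f b) (f a)" "\<not> le' (f a) (f c)" "\<not> le' (f c) (f a)"
     "\<not> le' (f b) (f c)" "\<not> le' (f c) (f b)" using R S ord by auto
  ultimately show False using N by blast
qed

lemma tr_chain: "C \<subseteq> S \<Longrightarrow> is_chain_in S le C \<longleftrightarrow> is_chain_in T le' (f ` C)"
proof -
  assume CS: "C \<subseteq> S"
  have "f ` C \<subseteq> T" using CS fS by auto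
  moreover have "(\<forall>a\<in>C. \<forall>b\<in>C. le a b \<or> le b a) \<longleftrightarrow> (\<forall>a\<in>C. \<forall>b\<in>C. le' (f a) (f b) \<or> le' (f b) (f a))"
    by (simp add: ord subsetD[OF CS])
  ultimately show ?thesis unfolding is_chain_in_def using CS by simp
qed

lemma tr_length: "lattice_length S le = lattice_length T le'"
proof -
  have "{card C - 1 | C. is_chain_in S le C} = {card D - 1 | D. is_chain_in T le' D}"
  proof (intro equalityI subsetI)
    fix k assume "k \<in> {card C - 1 | C. is_chain_in S le C}"
    then obtain C where C: "k = card C - 1" "is_chain_in S le C" by blast
    have CS: "C \<subseteq> S" using C unfolding is_chain_in_def by auto
    have "inj_on f C" using CS bij unfolding bij_betw_def by (meson inj_on_subset)
    then have "card (f ` C) = card C" by (simp add: card_image)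
    moreover have "is_chain_in T le' (f ` C)" using tr_chain CS C(2) by blast
    ultimately have "k = card (f ` C) - 1 \<and> is_chain_in T le' (f ` C)" using C(1) by simp
    then show "k \<in> {card D - 1 | D. is_chain_in T le' D}" by blast
  next
    fix k assume "k \<in> {card D - 1 | D. is_chain_in T le' D}"
    then obtain D where D: "k = card D - 1" "is_chain_in T le' D" by blast
    have DT: "D \<subseteq> T" using D unfolding is_chain_in_def by auto
    define C where "C = {v\<in>S. f v \<in> D}"
    have fC: "f ` C = D" unfolding C_def using DT fT by auto
    have CS: "C \<subseteq> S" unfolding C_def by auto
    have "inj_on f C" using CS bij unfolding bij_betw_def by (meson inj_on_subset)
    then have "card D = card C" using fC by (metis card_image)
    moreover have "is_chain_in S le C" using tr_chain CS D(2) fC by blast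
    ultimately have "k = card C - 1 \<and> is_chain_in S le C" using D(1) by simp
    then show "k \<in> {card C - 1 | C. is_chain_in S le C}" by blast
  qed
  then show ?thesis unfolding lattice_length_def by simp
qed

end


definition phi :: "nat \<Rightarrow> (nat \<Rightarrow> nat) \<Rightarrow> nat \<times> nat \<Rightarrow> nat set" where
  "phi n \<pi> x = {k\<in>{1..n}. k \<le> fst x \<or> \<pi> k \<le> snd x}"

definition KK :: "nat \<Rightarrow> (nat \<Rightarrow> nat) \<Rightarrow> ((nat \<times> nat) \<times> (nat \<times> nat)) set" where
  "KK n \<pi> = {(x,y). x \<in> grid n \<and> y \<in> grid n \<and> phi n \<pi> x = phi n \<pi> y}"

definition sat :: "nat \<Rightarrow> (nat \<Rightarrow> nat) \<Rightarrow> nat \<times> nat \<Rightarrow> bool" where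
  "sat n \<pi> x \<longleftrightarrow> (fst x = n \<or> snd x < \<pi> (fst x + 1)) \<and> (snd x = n \<or> fst x < inv \<pi> (snd x + 1))"

lemma phi_gjoin: "phi n \<pi> (gjoin x y) = phi n \<pi> x \<union> phi n \<pi> y"
  unfolding phi_def gjoin_def by auto

lemma gjoin_grid: "x \<in> grid n \<Longrightarrow> y \<in> grid n \<Longrightarrow> gjoin x y \<in> grid n"
  unfolding grid_def gjoin_def by auto

lemma KK_join_cong: "join_cong n (KK n \<pi>)"
  unfolding join_cong_def equiv_def refl_on_def sym_def trans_def KK_def
  by (auto simp: phi_gjoin gjoin_grid)

context
  fixes n :: nat and \<pi> :: "nat \<Rightarrow> nat"
  assumes perm: "\<pi> permutes {1..n}"
begin

lemma pi_in: "k \<in> {1..n} \<Longrightarrow> \<pi> k \<in> {1..n}"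
  using permutes_in_image[OF perm] by simp

lemma inv_in: "k \<in> {1..n} \<Longrightarrow> inv \<pi> k \<in> {1..n}"
  using permutes_in_image[OF permutes_inv[OF perm]] by simp

lemma pi_inv: "\<pi> (inv \<pi> k) = k"
  using permutes_inverses(1)[OF perm] by simp

lemma inv_pi: "inv \<pi> (\<pi> k) = k"
  using permutes_inverses(2)[OF perm] by simp

lemma KK_collapses: "i \<in> {1..n} \<Longrightarrow> collapses_triple \<pi> i (KK n \<pi>)"
proof -
  assume i: "i \<in> {1..n}"
  have pi: "\<pi> i \<in> {1..n}" using pi_in[OF i] .
  have g: "(i - 1, \<pi> i) \<in> grid n" "(i, \<pi> i) \<in> grid n" "(i, \<pi> i - 1) \<in> grid n"
    using i pi unfolding grid_def by auto
  have e1: "phi n \<pi> (i - 1, \<pi> i) = phi n \<pi> (i, \<pi> i)"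
  proof -
    have "(k \<le> i - 1 \<or> \<pi> k \<le> \<pi> i) = (k \<le> i \<or> \<pi> k \<le> \<pi> i)" for k
      using i by (cases "k = i") auto
    then show ?thesis by (simp add: phi_def)
  qed
  have e2: "phi n \<pi> (i, \<pi> i - 1) = phi n \<pi> (i, \<pi> i)"
  proof -
    have inj: "\<pi> k = \<pi> i \<Longrightarrow> k = i" for k by (metis inv_pi)
    have "(k \<le> i \<or> \<pi> k \<le> \<pi> i - 1) = (k \<le> i \<or> \<pi> k \<le> \<pi> i)" for k
      using pi inj[of k] by (cases "\<pi> k = \<pi> i") auto
    then show ?thesis by (simp add: phi_def)
  qed
  show ?thesis unfolding collapses_triple_def KK_def using g e1 e2 by auto
qed

lemma beta_sub: "beta n \<pi> \<subseteq> KK n \<pi>"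
  unfolding beta_def using KK_join_cong KK_collapses by (intro Inter_lower) auto


lemma hmove:
  assumes th: "join_cong n \<theta>" "\<forall>i\<in>{1..n}. collapses_triple \<pi> i \<theta>"
    and a: "a < n" "\<pi> (a+1) \<le> b" "b \<le> n"
  shows "((a,b),(a+1,b)) \<in> \<theta>"
proof -
  have i: "a+1 \<in> {1..n}" using a by auto
  have "collapses_triple \<pi> (a+1) \<theta>" using th(2) i by blast
  then have c: "((a, \<pi> (a+1)), (a+1, \<pi> (a+1))) \<in> \<theta>"
    unfolding collapses_triple_def by simp
  have z: "(0,b) \<in> grid n" using a unfolding grid_def by auto
  have "(gjoin (a, \<pi> (a+1)) (0,b), gjoin (a+1, \<pi> (a+1)) (0,b)) \<in> \<theta>"
    using th(1) c z unfolding join_cong_def by blast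
  then show ?thesis using a unfolding gjoin_def by (simp add: max_def)
qed

lemma vmove:
  assumes th: "join_cong n \<theta>" "\<forall>i\<in>{1..n}. collapses_triple \<pi> i \<theta>"
    and a: "b < n" "inv \<pi> (b+1) \<le> a" "a \<le> n"
  shows "((a,b),(a,b+1)) \<in> \<theta>"
proof -
  define i where "i = inv \<pi> (b+1)"
  have i: "i \<in> {1..n}" using a inv_in i_def by auto
  have pii: "\<pi> i = b + 1" using pi_inv i_def by simp
  have c: "((i, b), (i, b+1)) \<in> \<theta>"
    using th(2) i pii unfolding collapses_triple_def by fastforce
  have z: "(a,0) \<in> grid n" using a unfolding grid_def by auto
  have "(gjoin (i, b) (a,0), gjoin (i, b+1) (a,0)) \<in> \<theta>"
    using th(1) c z unfolding join_cong_def by blast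
  then show ?thesis using a i_def unfolding gjoin_def by (simp add: max_def)
qed

lemma phi_hmove: "\<pi> (a+1) \<le> b \<Longrightarrow> phi n \<pi> (a+1,b) = phi n \<pi> (a,b)"
  unfolding phi_def by (auto simp: le_Suc_eq)

lemma phi_vmove: "inv \<pi> (b+1) \<le> a \<Longrightarrow> phi n \<pi> (a,b+1) = phi n \<pi> (a,b)"
  unfolding phi_def by (auto simp: le_Suc_eq) (metis inv_pi)

lemma to_sat:
  assumes th: "join_cong n \<theta>" "\<forall>i\<in>{1..n}. collapses_triple \<pi> i \<theta>"
  shows "x \<in> grid n \<Longrightarrow> \<exists>s. s \<in> grid n \<and> sat n \<pi> s \<and> (x,s) \<in> \<theta> \<and> phi n \<pi> x = phi n \<pi> s"
proof (induction "(n - fst x) + (n - snd x)" arbitrary: x rule: less_induct)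
  case less
  obtain a b where x: "x = (a,b)" by fastforce
  have ab: "a \<le> n" "b \<le> n" using less.prems x unfolding grid_def by auto
  have eq: "equiv (grid n) \<theta>" using th(1) unfolding join_cong_def by blast
  show ?case
  proof (cases "sat n \<pi> x")
    case True
    have "(x,x) \<in> \<theta>" using eq less.prems unfolding equiv_def refl_on_def by blast
    then show ?thesis using less.prems True by blast
  next
    case False
    then have "(a < n \<and> \<pi> (a+1) \<le> b) \<or> (b < n \<and> inv \<pi> (b+1) \<le> a)"
      using ab x unfolding sat_def by auto
    then show ?thesis
    proof
      assume h: "a < n \<and> \<pi> (a+1) \<le> b"
      have g: "(a+1,b) \<in> grid n" using h ab unfolding grid_def by auto
      obtain s where s: "s \<in> grid n" "sat n \<pi> s" "((a+1,b),s) \<in> \<theta>" "phi n \<pi> (a+1,b) = phi n \<pi> s"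
        using less.hyps[of "(a+1,b)"] g h x by (auto simp: diff_less_mono2)
      have "((a,b),(a+1,b)) \<in> \<theta>" using hmove[OF th] h ab by auto
      then have "((a,b),s) \<in> \<theta>" using s(3) eq unfolding equiv_def trans_def by blast
      moreover have "phi n \<pi> x = phi n \<pi> s" using s(4) phi_hmove h x by simp
      ultimately show ?thesis using s x by blast
    next
      assume h: "b < n \<and> inv \<pi> (b+1) \<le> a"
      have g: "(a,b+1) \<in> grid n" using h ab unfolding grid_def by auto
      obtain s where s: "s \<in> grid n" "sat n \<pi> s" "((a,b+1),s) \<in> \<theta>" "phi n \<pi> (a,b+1) = phi n \<pi> s"
        using less.hyps[of "(a,b+1)"] g h x by (auto simp: diff_less_mono2)
      have "((a,b),(a,b+1)) \<in> \<theta>" using vmove[OF th] h ab by auto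
      then have "((a,b),s) \<in> \<theta>" using s(3) eq unfolding equiv_def trans_def by blast
      moreover have "phi n \<pi> x = phi n \<pi> s" using s(4) phi_vmove h x by simp
      ultimately show ?thesis using s x by blast
    qed
  qed
qed

lemma sat_unique:
  assumes "s \<in> grid n" "t \<in> grid n" "sat n \<pi> s" "sat n \<pi> t" "phi n \<pi> s = phi n \<pi> t"
  shows "s = t"
proof -
  obtain a b a' b' where st: "s = (a,b)" "t = (a',b')" by fastforce
  have r: "a \<le> n" "b \<le> n" "a' \<le> n" "b' \<le> n" using assms(1,2) st unfolding grid_def by auto
  have A: "a \<le> a'" if "sat n \<pi> (a,b)" "sat n \<pi> (a',b')" "phi n \<pi> (a,b) = phi n \<pi> (a',b')"
    "a \<le> n" "a' \<le> n" for a b a' b'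
  proof (rule ccontr)
    assume "\<not> a \<le> a'"
    then have "a' + 1 \<in> phi n \<pi> (a,b)" using that(4) by (auto simp: phi_def)
    then have "a' + 1 \<in> phi n \<pi> (a',b')" using that by simp
    then have "\<pi> (a'+1) \<le> b'" by (auto simp: phi_def)
    moreover have "a' \<noteq> n" using \<open>\<not> a \<le> a'\<close> that by auto
    ultimately show False using that(2) unfolding sat_def by auto
  qed
  have B: "b \<le> b'" if "sat n \<pi> (a,b)" "sat n \<pi> (a',b')" "phi n \<pi> (a,b) = phi n \<pi> (a',b')"
    "b \<le> n" "b' \<le> n" for a b a' b'
  proof (rule ccontr)
    assume nb: "\<not> b \<le> b'"
    define k where "k = inv \<pi> (b'+1)"
    have k: "k \<in> {1..n}" "\<pi> k = b' + 1" using inv_in pi_inv k_def nb that by auto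
    then have "k \<in> phi n \<pi> (a,b)" using nb unfolding phi_def by auto
    then have "k \<in> phi n \<pi> (a',b')" using that by simp
    then show False using that k nb k_def unfolding phi_def sat_def by auto
  qed
  show ?thesis using A[of a b a' b'] A[of a' b' a b] B[of a b a' b'] B[of a' b' a b] assms st r by auto
qed

lemma KK_sub: "KK n \<pi> \<subseteq> beta n \<pi>"
  unfolding beta_def
proof (intro Inter_greatest subrelI)
  fix \<theta> x y assume "\<theta> \<in> {\<theta>. join_cong n \<theta> \<and> (\<forall>i\<in>{1..n}. collapses_triple \<pi> i \<theta>)}"
    and xy: "(x,y) \<in> KK n \<pi>"
  then have th: "join_cong n \<theta>" "\<forall>i\<in>{1..n}. collapses_triple \<pi> i \<theta>" by auto
  have g: "x \<in> grid n" "y \<in> grid n" "phi n \<pi> x = phi n \<pi> y" using xy unfolding KK_def by auto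
  obtain s where s: "s \<in> grid n" "sat n \<pi> s" "(x,s) \<in> \<theta>" "phi n \<pi> x = phi n \<pi> s"
    using to_sat[OF th g(1)] by blast
  obtain t where t: "t \<in> grid n" "sat n \<pi> t" "(y,t) \<in> \<theta>" "phi n \<pi> y = phi n \<pi> t"
    using to_sat[OF th g(2)] by blast
  have "s = t" using sat_unique[OF s(1) t(1) s(2) t(2)] s(4) t(4) g(3) by simp
  have eq: "equiv (grid n) \<theta>" using th(1) unfolding join_cong_def by blast
  show "(x,y) \<in> \<theta>" using s(3) t(3) \<open>s = t\<close> eq unfolding equiv_def sym_def trans_def by blast
qed

lemma beta_eq: "beta n \<pi> = KK n \<pi>"
  using beta_sub KK_sub by blast

end

definition Phi :: "nat \<Rightarrow> (nat \<Rightarrow> nat) \<Rightarrow> (nat \<times> nat) set \<Rightarrow> nat set" where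
  "Phi n \<pi> A = the_elem (phi n \<pi> ` A)"

lemma KK_class: "x \<in> grid n \<Longrightarrow> KK n \<pi> `` {x} = {y \<in> grid n. phi n \<pi> y = phi n \<pi> x}"
  unfolding KK_def by auto

lemma Phi_class: "x \<in> grid n \<Longrightarrow> Phi n \<pi> (KK n \<pi> `` {x}) = phi n \<pi> x"
proof -
  assume x: "x \<in> grid n"
  have "phi n \<pi> ` (KK n \<pi> `` {x}) = {phi n \<pi> x}" using x KK_class[OF x] by auto
  then show ?thesis unfolding Phi_def by simp
qed

lemma quot_le_iff:
  assumes "x \<in> grid n" "y \<in> grid n"
  shows "quot_le (KK n \<pi>) (KK n \<pi> `` {x}) (KK n \<pi> `` {y}) \<longleftrightarrow> phi n \<pi> x \<subseteq> phi n \<pi> y"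
proof
  assume "quot_le (KK n \<pi>) (KK n \<pi> `` {x}) (KK n \<pi> `` {y})"
  then obtain x' y' where "x' \<in> KK n \<pi> `` {x}" "y' \<in> KK n \<pi> `` {y}" "(gjoin x' y', y') \<in> KK n \<pi>"
    unfolding quot_le_def by blast
  then show "phi n \<pi> x \<subseteq> phi n \<pi> y" using assms unfolding KK_def by (auto simp: phi_gjoin)
next
  assume "phi n \<pi> x \<subseteq> phi n \<pi> y"
  then have "(gjoin x y, y) \<in> KK n \<pi>" using assms unfolding KK_def by (auto simp: phi_gjoin gjoin_grid)
  moreover have "x \<in> KK n \<pi> `` {x}" "y \<in> KK n \<pi> `` {y}" using assms unfolding KK_def by auto
  ultimately show "quot_le (KK n \<pi>) (KK n \<pi> `` {x}) (KK n \<pi> `` {y})" unfolding quot_le_def by blast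
qed

lemma quot_le_Phi:
  assumes "A \<in> grid n // KK n \<pi>" "B \<in> grid n // KK n \<pi>"
  shows "quot_le (KK n \<pi>) A B \<longleftrightarrow> Phi n \<pi> A \<subseteq> Phi n \<pi> B"
  using assms by (auto elim!: quotientE simp: quot_le_iff Phi_class)

lemma Phi_bij: "bij_betw (Phi n \<pi>) (grid n // KK n \<pi>) (phi n \<pi> ` grid n)"
proof (rule bij_betw_imageI)
  show "inj_on (Phi n \<pi>) (grid n // KK n \<pi>)"
  proof (rule inj_onI)
    fix A B assume "A \<in> grid n // KK n \<pi>" "B \<in> grid n // KK n \<pi>" "Phi n \<pi> A = Phi n \<pi> B"
    then show "A = B"
    proof (elim quotientE)
      fix x y assume "x \<in> grid n" "A = KK n \<pi> `` {x}" "y \<in> grid n" "B = KK n \<pi> `` {y}"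
        "Phi n \<pi> A = Phi n \<pi> B"
      then have "phi n \<pi> x = phi n \<pi> y" by (simp add: Phi_class)
      then show "A = B" using \<open>x \<in> grid n\<close> \<open>y \<in> grid n\<close> \<open>A = KK n \<pi> `` {x}\<close> \<open>B = KK n \<pi> `` {y}\<close>
        by (simp add: KK_class)
    qed
  qed
  show "Phi n \<pi> ` (grid n // KK n \<pi>) = phi n \<pi> ` grid n"
    by (auto elim!: quotientE simp: Phi_class intro!: quotientI image_eqI)
qed


lemma phi_mono: "a \<le> a' \<Longrightarrow> b \<le> b' \<Longrightarrow> phi n \<pi> (a,b) \<subseteq> phi n \<pi> (a',b')"
  unfolding phi_def by auto

lemma phi_sub: "phi n \<pi> x \<subseteq> {1..n}"
  unfolding phi_def by auto

lemma phi_hins: "a + 1 \<le> n \<Longrightarrow> phi n \<pi> (a+1,b) = insert (a+1) (phi n \<pi> (a,b))"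
  unfolding phi_def by (auto simp: le_Suc_eq)

lemma finite_L: "finite (phi n \<pi> ` grid n)"
  unfolding grid_def by auto

lemma L_union: "X \<in> phi n \<pi> ` grid n \<Longrightarrow> Y \<in> phi n \<pi> ` grid n \<Longrightarrow> X \<union> Y \<in> phi n \<pi> ` grid n"
  by (auto simp: phi_gjoin[symmetric] intro!: imageI gjoin_grid)

lemma L_Union: "finite F \<Longrightarrow> F \<noteq> {} \<Longrightarrow> F \<subseteq> phi n \<pi> ` grid n \<Longrightarrow> \<Union>F \<in> phi n \<pi> ` grid n"
proof (induction F rule: finite_ne_induct)
  case (singleton x) then show ?case by simp
next
  case (insert x F) then show ?case using L_union[where X=x and Y="\<Union>F"] by simp
qed

lemma lub_L: "X \<in> phi n \<pi> ` grid n \<Longrightarrow> Y \<in> phi n \<pi> ` grid n \<Longrightarrow> is_lub (phi n \<pi> ` grid n) (\<subseteq>) X Y (X \<union> Y)"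
  unfolding is_lub_def using L_union by blast

lemma lub_L_eq: "is_lub (phi n \<pi> ` grid n) (\<subseteq>) X Y U \<Longrightarrow> X \<in> phi n \<pi> ` grid n \<Longrightarrow> Y \<in> phi n \<pi> ` grid n \<Longrightarrow> U = X \<union> Y"
proof -
  assume U: "is_lub (phi n \<pi> ` grid n) (\<subseteq>) X Y U" and XY: "X \<in> phi n \<pi> ` grid n" "Y \<in> phi n \<pi> ` grid n"
  have u: "X \<subseteq> U" "Y \<subseteq> U" "\<forall>w\<in>phi n \<pi> ` grid n. X \<subseteq> w \<longrightarrow> Y \<subseteq> w \<longrightarrow> U \<subseteq> w"
    using U unfolding is_lub_def by blast+
  have "X \<union> Y \<in> phi n \<pi> ` grid n" using L_union[OF XY] .
  then have "U \<subseteq> X \<union> Y" using u(3) by blast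
  then show ?thesis using u(1,2) by blast
qed

context
  fixes n :: nat and \<pi> :: "nat \<Rightarrow> nat"
  assumes perm: "\<pi> permutes {1..n}"
begin

lemma phi_a0: "a \<le> n \<Longrightarrow> phi n \<pi> (a,0) = {1..a}"
  unfolding phi_def using pi_in[OF perm] by fastforce

lemma phi_00: "phi n \<pi> (0,0) = {}"
  using phi_a0 by simp

lemma phi_vins: "b + 1 \<le> n \<Longrightarrow> phi n \<pi> (a,b+1) = insert (inv \<pi> (b+1)) (phi n \<pi> (a,b))"
proof -
  assume h: "b + 1 \<le> n"
  have i: "inv \<pi> (b+1) \<in> {1..n}" using inv_in[OF perm, of "b+1"] h by auto
  have p: "\<pi> (inv \<pi> (b+1)) = b+1" using pi_inv[OF perm] .
  have q: "\<pi> k = b + 1 \<Longrightarrow> k = inv \<pi> (b+1)" for k using inv_pi[OF perm] by metis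
  have "k \<in> phi n \<pi> (a,b+1) \<longleftrightarrow> k \<in> insert (inv \<pi> (b+1)) (phi n \<pi> (a,b))" for k
  proof (cases "k = inv \<pi> (b+1)")
    case True then show ?thesis using i p by (simp add: phi_def)
  next
    case False then have "\<pi> k \<noteq> b+1" using q by blast
    then have "(\<pi> k \<le> b + 1) = (\<pi> k \<le> b)" by auto
    then show ?thesis using False by (simp add: phi_def)
  qed
  then show ?thesis by blast
qed

lemma glb_L: "X \<in> phi n \<pi> ` grid n \<Longrightarrow> Y \<in> phi n \<pi> ` grid n \<Longrightarrow>
  is_glb (phi n \<pi> ` grid n) (\<subseteq>) X Y (\<Union>{W \<in> phi n \<pi> ` grid n. W \<subseteq> X \<and> W \<subseteq> Y})"
proof -
  let ?F = "{W \<in> phi n \<pi> ` grid n. W \<subseteq> X \<and> W \<subseteq> Y}"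
  have "{} \<in> ?F" using phi_00 by (force simp: grid_def)
  then have "\<Union>?F \<in> phi n \<pi> ` grid n" using L_Union[where F="?F" and n=n and \<pi>=\<pi>] finite_L[of n \<pi>] by (auto intro: finite_subset)
  then show ?thesis unfolding is_glb_def by blast
qed

lemma lattice_L: "is_lattice (phi n \<pi> ` grid n) (\<subseteq>)"
  unfolding is_lattice_def using lub_L glb_L by blast

lemma sat_le_a:
  assumes "sat n \<pi> (a',b')" "a \<le> n" "phi n \<pi> (a,b) \<subseteq> phi n \<pi> (a',b')"
  shows "a \<le> a'"
proof (rule ccontr)
  assume "\<not> a \<le> a'"
  then have "a' + 1 \<in> phi n \<pi> (a,b)" using assms(2) by (auto simp: phi_def)
  then have "a' + 1 \<in> phi n \<pi> (a',b')" using assms by blast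
  then have "\<pi> (a'+1) \<le> b'" by (auto simp: phi_def)
  moreover have "a' \<noteq> n" using \<open>\<not> a \<le> a'\<close> assms by auto
  ultimately show False using assms(1) unfolding sat_def by auto
qed

lemma sat_le_b:
  assumes "sat n \<pi> (a',b')" "b \<le> n" "phi n \<pi> (a,b) \<subseteq> phi n \<pi> (a',b')"
  shows "b \<le> b'"
proof (rule ccontr)
  assume nb: "\<not> b \<le> b'"
  define k where "k = inv \<pi> (b'+1)"
  have k: "k \<in> {1..n}" "\<pi> k = b' + 1" using inv_in[OF perm] pi_inv[OF perm] k_def nb assms by auto
  then have "k \<in> phi n \<pi> (a,b)" using nb unfolding phi_def by auto
  then have "k \<in> phi n \<pi> (a',b')" using assms by blast
  then show False using assms k nb k_def unfolding phi_def sat_def by auto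
qed

lemma L_sat: "X \<in> phi n \<pi> ` grid n \<Longrightarrow> \<exists>s\<in>grid n. sat n \<pi> s \<and> X = phi n \<pi> s"
proof -
  assume "X \<in> phi n \<pi> ` grid n"
  then obtain x where x: "x \<in> grid n" "X = phi n \<pi> x" by blast
  have th: "join_cong n (KK n \<pi>)" "\<forall>i\<in>{1..n}. collapses_triple \<pi> i (KK n \<pi>)"
    using KK_join_cong KK_collapses[OF perm] by auto
  show ?thesis using to_sat[OF perm th x(1)] x(2) by metis
qed

lemma covers_L:
  assumes cv: "covers (phi n \<pi> ` grid n) (\<subseteq>) X Y"
  shows "\<exists>k. k \<notin> X \<and> Y = insert k X"
proof -
  have XY: "X \<in> phi n \<pi> ` grid n" "Y \<in> phi n \<pi> ` grid n" "X \<subseteq> Y" "X \<noteq> Y"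
    and nob: "\<And>C. C \<in> phi n \<pi> ` grid n \<Longrightarrow> X \<subseteq> C \<Longrightarrow> C \<subseteq> Y \<Longrightarrow> C = X \<or> C = Y"
    using cv unfolding covers_def by blast+
  obtain s0 where s0: "s0 \<in> grid n" "sat n \<pi> s0" "X = phi n \<pi> s0" using L_sat[OF XY(1)] by blast
  obtain a b where s: "(a,b) \<in> grid n" "sat n \<pi> (a,b)" "X = phi n \<pi> (a,b)" using s0 by (cases s0) auto
  obtain t0 where t0: "t0 \<in> grid n" "sat n \<pi> t0" "Y = phi n \<pi> t0" using L_sat[OF XY(2)] by blast
  obtain a' b' where t: "(a',b') \<in> grid n" "sat n \<pi> (a',b')" "Y = phi n \<pi> (a',b')" using t0 by (cases t0) auto
  have r: "a \<le> n" "b \<le> n" "a' \<le> n" "b' \<le> n" using s t unfolding grid_def by auto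
  have le: "a \<le> a'" "b \<le> b'" using sat_le_a[OF t(2)] sat_le_b[OF t(2)] r XY s t by auto
  have "a < a' \<or> b < b'" using le XY s t by (metis le_neq_implies_less)
  then show ?thesis
  proof
    assume "a < a'"
    define C where "C = phi n \<pi> (a+1,b)"
    have C: "C \<in> phi n \<pi> ` grid n" using \<open>a < a'\<close> r unfolding C_def grid_def by auto
    have CI: "C = insert (a+1) X" unfolding C_def using phi_hins \<open>a < a'\<close> r s by auto
    have nX: "a + 1 \<notin> X" using s(2,3) \<open>a < a'\<close> r unfolding sat_def phi_def by auto
    have "C \<subseteq> Y" unfolding C_def using t phi_mono \<open>a < a'\<close> le by auto
    then have "C = Y" using nob[OF C] CI nX by auto
    then show ?thesis using CI nX by blast
  next
    assume "b < b'"
    define C where "C = phi n \<pi> (a,b+1)"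
    have C: "C \<in> phi n \<pi> ` grid n" using \<open>b < b'\<close> r unfolding C_def grid_def by auto
    have CI: "C = insert (inv \<pi> (b+1)) X" unfolding C_def using phi_vins \<open>b < b'\<close> r s by auto
    have nX: "inv \<pi> (b+1) \<notin> X" using s(2,3) \<open>b < b'\<close> r pi_inv[OF perm, of "b+1"] unfolding sat_def phi_def by auto
    have "C \<subseteq> Y" unfolding C_def using t phi_mono \<open>b < b'\<close> le by auto
    then have "C = Y" using nob[OF C] CI nX by auto
    then show ?thesis using CI nX by blast
  qed
qed

lemma semimodular_L: "semimodular (phi n \<pi> ` grid n) (\<subseteq>)"
  unfolding semimodular_def
proof (intro allI impI)
  fix X Y C U V
  assume cv: "covers (phi n \<pi> ` grid n) (\<subseteq>) X Y" and C: "C \<in> phi n \<pi> ` grid n"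
    and U: "is_lub (phi n \<pi> ` grid n) (\<subseteq>) X C U" and V: "is_lub (phi n \<pi> ` grid n) (\<subseteq>) Y C V"
  obtain k where k: "k \<notin> X" "Y = insert k X" using covers_L[OF cv] by blast
  have XY: "X \<in> phi n \<pi> ` grid n" "Y \<in> phi n \<pi> ` grid n" using cv unfolding covers_def by auto
  have Ue: "U = X \<union> C" using lub_L_eq[OF U XY(1) C] .
  have Ve: "V = insert k U" using lub_L_eq[OF V XY(2) C] k Ue by auto
  have UV: "U \<in> phi n \<pi> ` grid n" "V \<in> phi n \<pi> ` grid n" using U V unfolding is_lub_def by auto
  show "U = V \<or> covers (phi n \<pi> ` grid n) (\<subseteq>) U V"
  proof (cases "k \<in> U")
    case True then show ?thesis using Ve by auto
  next
    case False
    have "covers (phi n \<pi> ` grid n) (\<subseteq>) U V"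
      unfolding covers_def using UV Ve False by (auto simp: subset_insert_iff)
    then show ?thesis by blast
  qed
qed

lemma JI_L: "join_irreducibles (phi n \<pi> ` grid n) (\<subseteq>) \<subseteq>
   (\<lambda>a. phi n \<pi> (a,0)) ` {0..n} \<union> (\<lambda>b. phi n \<pi> (0,b)) ` {0..n}"
proof
  fix X assume X: "X \<in> join_irreducibles (phi n \<pi> ` grid n) (\<subseteq>)"
  then have "X \<in> phi n \<pi> ` grid n" unfolding join_irreducibles_def by blast
  then obtain x where "x \<in> grid n" "X = phi n \<pi> x" by blast
  then obtain a b where ab: "(a,b) \<in> grid n" "X = phi n \<pi> (a,b)" by (cases x) auto
  have r: "a \<le> n" "b \<le> n" using ab unfolding grid_def by auto
  have m: "phi n \<pi> (a,0) \<in> phi n \<pi> ` grid n" "phi n \<pi> (0,b) \<in> phi n \<pi> ` grid n"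
    using r unfolding grid_def by auto
  have "X = phi n \<pi> (a,0) \<union> phi n \<pi> (0,b)" using ab(2) unfolding phi_def by auto
  then have "is_lub (phi n \<pi> ` grid n) (\<subseteq>) (phi n \<pi> (a,0)) (phi n \<pi> (0,b)) X" using lub_L[OF m] by simp
  then have "X = phi n \<pi> (a,0) \<or> X = phi n \<pi> (0,b)" using X m unfolding join_irreducibles_def by blast
  then show "X \<in> (\<lambda>a. phi n \<pi> (a,0)) ` {0..n} \<union> (\<lambda>b. phi n \<pi> (0,b)) ` {0..n}" using r by auto
qed

lemma slim_L: "slim (phi n \<pi> ` grid n) (\<subseteq>)"
proof -
  let ?c1 = "(\<lambda>a. phi n \<pi> (a,0)) ` {0..n}" and ?c2 = "(\<lambda>b. phi n \<pi> (0,b)) ` {0..n}"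
  have l1: "phi n \<pi> (a,0) \<subseteq> phi n \<pi> (a',0) \<or> phi n \<pi> (a',0) \<subseteq> phi n \<pi> (a,0)" for a a'
    by (metis phi_mono nat_le_linear order_refl)
  have l2: "phi n \<pi> (0,a) \<subseteq> phi n \<pi> (0,a') \<or> phi n \<pi> (0,a') \<subseteq> phi n \<pi> (0,a)" for a a'
    by (metis phi_mono nat_le_linear order_refl)
  have c1: "\<And>A B. A \<in> ?c1 \<Longrightarrow> B \<in> ?c1 \<Longrightarrow> A \<subseteq> B \<or> B \<subseteq> A"
    using l1 by blast
  have c2: "\<And>A B. A \<in> ?c2 \<Longrightarrow> B \<in> ?c2 \<Longrightarrow> A \<subseteq> B \<or> B \<subseteq> A"
    using l2 by blast
  show ?thesis unfolding slim_def
  proof (rule notI, elim bexE conjE)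
    fix A B C assume J: "A \<in> join_irreducibles (phi n \<pi> ` grid n) (\<subseteq>)"
      "B \<in> join_irreducibles (phi n \<pi> ` grid n) (\<subseteq>)" "C \<in> join_irreducibles (phi n \<pi> ` grid n) (\<subseteq>)"
      and R: "\<not> A \<subseteq> B" "\<not> B \<subseteq> A" "\<not> A \<subseteq> C" "\<not> C \<subseteq> A" "\<not> B \<subseteq> C" "\<not> C \<subseteq> B"
    have m: "A \<in> ?c1 \<or> A \<in> ?c2" "B \<in> ?c1 \<or> B \<in> ?c2" "C \<in> ?c1 \<or> C \<in> ?c2"
      using subsetD[OF JI_L J(1)] subsetD[OF JI_L J(2)] subsetD[OF JI_L J(3)] by blast+
    show False using m c1[of A B] c1[of A C] c1[of B C] c2[of A B] c2[of A C] c2[of B C] R by blast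
  qed
qed

lemma length_L: "lattice_length (phi n \<pi> ` grid n) (\<subseteq>) = n"
proof -
  let ?L = "phi n \<pi> ` grid n"
  let ?M = "{card C - 1 | C. is_chain_in ?L (\<subseteq>) C}"
  have bound: "k \<le> n" if "k \<in> ?M" for k
  proof -
    obtain C where C: "k = card C - 1" "is_chain_in ?L (\<subseteq>) C" using \<open>k \<in> ?M\<close> by blast
    have CL: "C \<subseteq> ?L" and ch: "\<forall>A\<in>C. \<forall>B\<in>C. A \<subseteq> B \<or> B \<subseteq> A" using C unfolding is_chain_in_def by auto
    have sub: "\<And>A. A \<in> C \<Longrightarrow> A \<subseteq> {1..n}" using CL phi_sub by blast
    have "inj_on card C"
    proof (rule inj_onI)
      fix A B assume "A \<in> C" "B \<in> C" "card A = card B"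
      moreover have "finite A" "finite B" using sub \<open>A \<in> C\<close> \<open>B \<in> C\<close> finite_subset by blast+
      ultimately show "A = B" using ch by (metis card_subset_eq)
    qed
    moreover have "card ` C \<subseteq> {0..n}"
    proof
      fix m assume "m \<in> card ` C"
      then obtain A where "A \<in> C" "m = card A" by blast
      then have "m \<le> card {1..n}" using sub by (metis card_mono finite_atLeastAtMost)
      then show "m \<in> {0..n}" by simp
    qed
    ultimately have "card C \<le> card {0..n}" by (intro card_inj_on_le) auto
    then show ?thesis using C by simp
  qed
  have "n \<in> ?M"
  proof -
    let ?C = "(\<lambda>a. phi n \<pi> (a,0)) ` {0..n}"
    have eq: "?C = (\<lambda>a. {1..a}) ` {0..n}" using phi_a0 by auto
    have "inj_on (\<lambda>a. {1..a::nat}) {0..n}"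
      by (rule inj_onI) (metis atLeastAtMost_iff card_atLeastAtMost diff_Suc_1)
    then have "card ?C = n + 1" using eq by (simp add: card_image)
    moreover have "is_chain_in ?L (\<subseteq>) ?C"
    proof -
      have "?C \<subseteq> ?L" unfolding grid_def by auto
      moreover have l1: "phi n \<pi> (a,0) \<subseteq> phi n \<pi> (a',0) \<or> phi n \<pi> (a',0) \<subseteq> phi n \<pi> (a,0)" for a a'
        by (metis phi_mono nat_le_linear order_refl)
      ultimately show ?thesis unfolding is_chain_in_def by blast
    qed
    ultimately show ?thesis by force
  qed
  moreover have "finite ?M" using bound by (meson finite_nat_set_iff_bounded_le)
  ultimately show ?thesis unfolding lattice_length_def using bound by (intro Max_eqI) auto
qed

end


theorem lemma4p2:
  fixes n :: nat and \<pi> :: "nat \<Rightarrow> nat"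
  assumes "\<pi> permutes {1..n}"
  shows "finite (quot n (beta n \<pi>))
    \<and> is_lattice (quot n (beta n \<pi>)) (quot_le (beta n \<pi>))
    \<and> slim (quot n (beta n \<pi>)) (quot_le (beta n \<pi>))
    \<and> semimodular (quot n (beta n \<pi>)) (quot_le (beta n \<pi>))
    \<and> lattice_length (quot n (beta n \<pi>)) (quot_le (beta n \<pi>)) = n"
proof -
  have b: "beta n \<pi> = KK n \<pi>" using beta_eq[OF assms] .
  have q: "quot n (beta n \<pi>) = grid n // KK n \<pi>" unfolding quot_def b ..
  note bij = Phi_bij[of n \<pi>]
  have ord: "\<And>A B. A \<in> grid n // KK n \<pi> \<Longrightarrow> B \<in> grid n // KK n \<pi> \<Longrightarrow>
      quot_le (KK n \<pi>) A B = (Phi n \<pi> A \<subseteq> Phi n \<pi> B)"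
    using quot_le_Phi by blast
  have "finite (grid n // KK n \<pi>)" using bij_betw_finite[OF bij] finite_L by blast
  moreover have "is_lattice (grid n // KK n \<pi>) (quot_le (KK n \<pi>))"
    using tr_lattice[where f="Phi n \<pi>" and S="grid n // KK n \<pi>" and T="phi n \<pi> ` grid n" and le="quot_le (KK n \<pi>)" and le'="(\<subseteq>)", OF bij ord lattice_L[OF assms]] .
  moreover have "slim (grid n // KK n \<pi>) (quot_le (KK n \<pi>))"
    using tr_slim[where f="Phi n \<pi>" and S="grid n // KK n \<pi>" and T="phi n \<pi> ` grid n" and le="quot_le (KK n \<pi>)" and le'="(\<subseteq>)", OF bij ord slim_L[OF assms]] .
  moreover have "semimodular (grid n // KK n \<pi>) (quot_le (KK n \<pi>))"
    using tr_semimodular[where f="Phi n \<pi>" and S="grid n // KK n \<pi>" and T="phi n \<pi> ` grid n" and le="quot_le (KK n \<pi>)" and le'="(\<subseteq>)", OF bij ord semimodular_L[OF assms]] .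
  moreover have "lattice_length (grid n // KK n \<pi>) (quot_le (KK n \<pi>)) = n"
    using tr_length[where f="Phi n \<pi>" and S="grid n // KK n \<pi>" and T="phi n \<pi> ` grid n" and le="quot_le (KK n \<pi>)" and le'="(\<subseteq>)", OF bij ord] length_L[OF assms] by simp
  ultimately show ?thesis unfolding b quot_def by blast
qed


end
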